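(* Let $p$ be a prime and $m,k$ positive integers with $k\mid p^m-1$, and set $u=\frac{p^m-1}{k}$. Assume $u$ is a primitive divisor of $p^m-1$ and $u=b(p^{a}-1)$ with integers $a\ge1$, $b>1$, $m=ab$. Let $\omega$ be a primitive element of $\mathbb{F}_{p^m}$ and, for $x\in\mathbb{F}_{p^m}$, write $x=\sum_{i=0}^{b-1}c_i\omega^{ik}$ with $c_i\in\mathbb{F}_{p^a}$ and $[x]=(c_0,\ldots,c_{b-1})\in\mathbb{F}_{p^a}^b$, with $[x]_i:=c_{i-1}$ for $i=1,\ldots,b$. Then for all $x,y\in\mathbb{F}_{p^m}$ and every integer $r\ge0$, $$w_{\Gamma(k,p^m)}(r,x,y)=w_{H(b,p^{a})}(r,[x],[y])=\sum_{\substack{r_1+\cdots+r_b=r\\ r_i\ge0}} \frac{r!}{r_{1}!\cdots r_{b}!}\prod_{i=1}^b a_{i}(x,y),$$ where $$a_{i}(x,y)=\begin{cases}\frac{p^{a}-1}{p^{a}}\big((p^{a}-1)^{r_i-1}-(-1)^{r_i-1}\big) & \text{if } [x]_i=[y]_i,\\[1mm] \frac{1}{p^{a}}\big((p^{a}-1)^{r_i}-(-1)^{r_i}\big) & \text{if } [x]_i\neq[y]_i.\end{cases}$$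
   Context: For $k\mid p^m-1$, the generalized Paley graph $\Gamma(k,p^m)$ has vertex set $\mathbb{F}_{p^m}$, with $x,y$ adjacent iff $y-x\in R_k=\{z^k:z\in\mathbb{F}_{p^m}^*\}$. A divisor $u$ of $p^m-1$ is primitive if $u\nmid p^h-1$ for all $1\le h<m$. Under the hypotheses, $\{1,\omega^k,\omega^{2k},\ldots,\omega^{(b-1)k}\}$ is a basis of $\mathbb{F}_{p^m}$ over $\mathbb{F}_{p^a}$. The Hamming graph $H(b,q)$ has as vertices the $b$-tuples over a set of size $q$ (here $\mathbb{F}_{p^a}$), two tuples adjacent iff they differ in exactly one entry. $w_G(r,v,w)$ is the number of walks of length $r$ from $v$ to $w$ in $G$, with $w_G(0,v,w)=1$ if $v=w$ and $0$ otherwise. *)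

theory Defs
  imports Complex_Main "HOL-Computational_Algebra.Primes"
begin

definition walk_count :: "'v set \<Rightarrow> ('v \<Rightarrow> 'v \<Rightarrow> bool) \<Rightarrow> nat \<Rightarrow> 'v \<Rightarrow> 'v \<Rightarrow> nat" where
  "walk_count V E r v w = card {vs. length vs = Suc r \<and> set vs \<subseteq> V \<and> vs ! 0 = v \<and> vs ! r = w
      \<and> (\<forall>i<r. E (vs ! i) (vs ! Suc i))}"

definition kth_powers :: "nat \<Rightarrow> 'a::field set" where
  "kth_powers k = {z ^ k | z. z \<noteq> 0}"

text \<open>Generalized Paley graph: vertex set the whole finite field.\<close>
definition paley_adj :: "nat \<Rightarrow> 'a::field \<Rightarrow> 'a \<Rightarrow> bool" where
  "paley_adj k x y \<longleftrightarrow> y - x \<in> kth_powers k"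

text \<open>The subfield with q elements, q = p^a, inside the field of order p^m.\<close>
definition subfield_q :: "nat \<Rightarrow> 'a::field set" where
  "subfield_q q = {c. c ^ q = c}"

definition hamming_vertices :: "nat \<Rightarrow> 'a set \<Rightarrow> 'a list set" where
  "hamming_vertices b F = {cs. length cs = b \<and> set cs \<subseteq> F}"

definition hamming_adj :: "nat \<Rightarrow> 'a list \<Rightarrow> 'a list \<Rightarrow> bool" where
  "hamming_adj b cs ds \<longleftrightarrow> card {i. i < b \<and> cs ! i \<noteq> ds ! i} = 1"

definition coords :: "nat \<Rightarrow> nat \<Rightarrow> nat \<Rightarrow> 'a::field \<Rightarrow> 'a \<Rightarrow> 'a list" where
  "coords q b k \<omega> x = (THE cs. length cs = b \<and> set cs \<subseteq> subfield_q q
      \<and> x = (\<Sum>i<b. cs ! i * \<omega> ^ (i * k)))"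

definition primitive_divisor :: "nat \<Rightarrow> nat \<Rightarrow> nat \<Rightarrow> bool" where
  "primitive_divisor p m u \<longleftrightarrow> u dvd p ^ m - 1 \<and> (\<forall>h. 1 \<le> h \<and> h < m \<longrightarrow> \<not> u dvd p ^ h - 1)"

definition primitive_element :: "'a::{field,finite} \<Rightarrow> bool" where
  "primitive_element \<omega> \<longleftrightarrow> \<omega> \<noteq> 0 \<and> (\<forall>x. x \<noteq> 0 \<longrightarrow> (\<exists>n. x = \<omega> ^ n))"

text \<open>The factor a_i(x,y); exponents may be -1 (when r_i = 0), hence powi.\<close>
definition a_factor :: "nat \<Rightarrow> bool \<Rightarrow> nat \<Rightarrow> real" where
  "a_factor q eq ri = (if eq
     then (real q - 1) / real q * ((real q - 1) powi (int ri - 1) - (-1) powi (int ri - 1))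
     else 1 / real q * ((real q - 1) ^ ri - (-1) ^ ri))"

end

theory Submission
  imports Defs "HOL-Number_Theory.Residues" "HOL-Computational_Algebra.Polynomial"
begin


lemma walk_count_0: "walk_count V E 0 v w = (if v = w \<and> v \<in> V then 1 else 0)"
proof -
  have "{vs. length vs = Suc 0 \<and> set vs \<subseteq> V \<and> vs ! 0 = v \<and> vs ! 0 = w \<and> (\<forall>i<0. E (vs ! i) (vs ! Suc i))}
      = (if v = w \<and> v \<in> V then {[v]} else {})"
    by (auto simp: length_Suc_conv)
  then show ?thesis by (auto simp: walk_count_def)
qed

lemma walk_count_Suc:
  assumes "finite V" "v \<in> V"
  shows "walk_count V E (Suc r) v w = (\<Sum>z\<in>{z\<in>V. E v z}. walk_count V E r z w)"
proof -
  define B where "B z = {vs. length vs = Suc r \<and> set vs \<subseteq> V \<and> vs ! 0 = z \<and> vs ! r = w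
      \<and> (\<forall>i<r. E (vs ! i) (vs ! Suc i))}" for z
  have fin: "finite (B z)" for z
    by (rule finite_subset[of _ "{vs. set vs \<subseteq> V \<and> length vs = Suc r}"])
       (auto simp: B_def intro: finite_lists_length_eq assms)
  have eq: "{vs. length vs = Suc (Suc r) \<and> set vs \<subseteq> V \<and> vs ! 0 = v \<and> vs ! Suc r = w
      \<and> (\<forall>i<Suc r. E (vs ! i) (vs ! Suc i))} = (\<Union>z\<in>{z\<in>V. E v z}. Cons v ` B z)"
    (is "?L = ?R")
  proof (intro equalityI subsetI)
    fix vs assume H: "vs \<in> ?L"
    then obtain t where vs: "vs = v # t" by (cases vs) auto
    have "t \<in> B (t ! 0)"
      unfolding B_def
    proof (intro CollectI conjI allI impI)
      show "length t = Suc r" using H vs by auto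
      show "set t \<subseteq> V" using H vs by auto
      show "t ! r = w" using H vs by auto
      show "t ! 0 = t ! 0" ..
      fix i assume "i < r"
      then have "E (vs ! Suc i) (vs ! Suc (Suc i))" using H by blast
      then show "E (t ! i) (t ! Suc i)" using vs by simp
    qed
    moreover have "t ! 0 \<in> V"
    proof -
      have "length t = Suc r" "set t \<subseteq> V" using H vs by auto
      then show ?thesis by (metis nth_mem subsetD zero_less_Suc)
    qed
    moreover have "E v (t ! 0)"
    proof -
      have "E (vs ! 0) (vs ! Suc 0)" using H by blast
      then show ?thesis using vs by simp
    qed
    ultimately show "vs \<in> ?R" using vs by blast
  next
    fix vs assume "vs \<in> ?R"
    then obtain z t where z: "z \<in> V" "E v z" and t: "t \<in> B z" and vs: "vs = v # t" by blast
    show "vs \<in> ?L"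
    proof (intro CollectI conjI allI impI)
      show "length vs = Suc (Suc r)" "set vs \<subseteq> V" "vs ! 0 = v" "vs ! Suc r = w"
        using t vs assms by (auto simp: B_def)
      fix i assume i: "i < Suc r"
      show "E (vs ! i) (vs ! Suc i)"
      proof (cases i)
        case 0 then show ?thesis using vs t z by (simp add: B_def)
      next
        case (Suc j) then show ?thesis using vs t i by (simp add: B_def)
      qed
    qed
  qed
  have "walk_count V E (Suc r) v w = card (\<Union>z\<in>{z\<in>V. E v z}. Cons v ` B z)"
    unfolding walk_count_def eq ..
  also have "\<dots> = (\<Sum>z\<in>{z\<in>V. E v z}. card (Cons v ` B z))"
    apply (rule card_UN_disjoint)
    using assms(1) apply simp
    using fin apply blast
    apply (auto simp: B_def)
    done
  also have "\<dots> = (\<Sum>z\<in>{z\<in>V. E v z}. walk_count V E r z w)"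
    by (intro sum.cong refl) (simp add: card_image walk_count_def B_def)
  finally show ?thesis .
qed

lemma walk_count_iso:
  assumes fin: "finite V" and bij: "bij_betw f V V'"
    and adj: "\<And>x y. x \<in> V \<Longrightarrow> y \<in> V \<Longrightarrow> E' (f x) (f y) = E x y"
    and v: "v \<in> V" and w: "w \<in> V"
  shows "walk_count V' E' r (f v) (f w) = walk_count V E r v w"
  using v
proof (induction r arbitrary: v)
  case 0
  have "f v = f w \<longleftrightarrow> v = w" using bij 0 w by (metis bij_betw_def inj_on_def)
  moreover have "f v \<in> V'" using bij 0 bij_betwE by blast
  ultimately show ?case using 0 by (simp add: walk_count_0)
next
  case (Suc r)
  have finV': "finite V'" using bij fin bij_betw_finite by blast
  have fv: "f v \<in> V'" using bij Suc.prems bij_betwE by blast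
  have b2: "bij_betw f {z\<in>V. E v z} {z\<in>V'. E' (f v) z}"
  proof -
    have "bij_betw f {z\<in>V. E v z} (f ` {z\<in>V. E v z})"
      by (rule bij_betw_subset[OF bij]) auto
    moreover have "f ` {z\<in>V. E v z} = {z\<in>V'. E' (f v) z}"
    proof (intro equalityI subsetI)
      fix z assume "z \<in> f ` {z\<in>V. E v z}"
      then show "z \<in> {z\<in>V'. E' (f v) z}" using adj Suc.prems bij bij_betwE by fastforce
    next
      fix z assume z: "z \<in> {z\<in>V'. E' (f v) z}"
      then obtain y where "y \<in> V" "z = f y" using bij by (metis bij_betw_imp_surj_on imageE mem_Collect_eq)
      then show "z \<in> f ` {z\<in>V. E v z}" using z adj Suc.prems by auto
    qed
    ultimately show ?thesis by simp
  qed
  have "walk_count V' E' (Suc r) (f v) (f w) = (\<Sum>z\<in>{z\<in>V'. E' (f v) z}. walk_count V' E' r z (f w))"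
    by (rule walk_count_Suc[OF finV' fv])
  also have "\<dots> = (\<Sum>z\<in>{z\<in>V. E v z}. walk_count V' E' r (f z) (f w))"
    by (rule sum.reindex_bij_betw[OF b2, symmetric])
  also have "\<dots> = (\<Sum>z\<in>{z\<in>V. E v z}. walk_count V E r z w)"
    by (intro sum.cong refl) (auto intro: Suc.IH)
  also have "\<dots> = walk_count V E (Suc r) v w"
    by (rule walk_count_Suc[OF fin Suc.prems, symmetric])
  finally show ?case .
qed



fun ad1 :: "'a list \<Rightarrow> 'a list \<Rightarrow> bool" where
  "ad1 [] [] = False"
| "ad1 (x#xs) (z#zs) = ((x \<noteq> z \<and> xs = zs) \<or> (x = z \<and> ad1 xs zs))"
| "ad1 _ _ = False"

lemma diffset_Cons:
  "{i. i < Suc n \<and> (x#xs) ! i \<noteq> (z#zs) ! i} =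
     (if x \<noteq> z then {0} else {}) \<union> Suc ` {i. i < n \<and> xs ! i \<noteq> zs ! i}"
proof (intro equalityI subsetI)
  fix i assume "i \<in> {i. i < Suc n \<and> (x#xs) ! i \<noteq> (z#zs) ! i}"
  then show "i \<in> (if x \<noteq> z then {0} else {}) \<union> Suc ` {i. i < n \<and> xs ! i \<noteq> zs ! i}"
    by (cases i) auto
next
  fix i assume "i \<in> (if x \<noteq> z then {0} else {}) \<union> Suc ` {i. i < n \<and> xs ! i \<noteq> zs ! i}"
  then show "i \<in> {i. i < Suc n \<and> (x#xs) ! i \<noteq> (z#zs) ! i}"
    by (auto split: if_splits)
qed

lemma card_diffset_Cons:
  "card {i. i < Suc n \<and> (x#xs) ! i \<noteq> (z#zs) ! i} =
     (if x \<noteq> z then 1 else 0) + card {i. i < n \<and> xs ! i \<noteq> zs ! i}"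
proof -
  have "card ((if x \<noteq> z then {0} else {}) \<union> Suc ` {i. i < n \<and> xs ! i \<noteq> zs ! i})
      = card (if x \<noteq> z then {0::nat} else {}) + card (Suc ` {i. i < n \<and> xs ! i \<noteq> zs ! i})"
    by (rule card_Un_disjoint) auto
  then show ?thesis by (simp add: diffset_Cons card_image)
qed

lemma hamming_adj_ad1:
  "length xs = n \<Longrightarrow> length zs = n \<Longrightarrow> hamming_adj n xs zs = ad1 xs zs"
proof (induction xs arbitrary: zs n)
  case Nil then show ?case by (simp add: hamming_adj_def)
next
  case (Cons x xs)
  then obtain z zs' n' where zs: "zs = z # zs'" and n: "n = Suc n'" and l: "length xs = n'" "length zs' = n'"
    by (cases zs) auto
  have c0: "card {i. i < n' \<and> xs ! i \<noteq> zs' ! i} = 0 \<longleftrightarrow> xs = zs'"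
    using l by (auto simp: list_eq_iff_nth_eq)
  show ?case
    using Cons.IH[OF l] c0 unfolding zs n hamming_adj_def card_diffset_Cons
    by auto
qed

definition NB :: "'a set \<Rightarrow> 'a list \<Rightarrow> 'a list set" where
  "NB F xs = {zs. length zs = length xs \<and> set zs \<subseteq> F \<and> ad1 xs zs}"

lemma NB_Nil: "NB F [] = {}"
  by (auto simp: NB_def)

lemma NB_Cons:
  assumes "x \<in> F" "set xs \<subseteq> F"
  shows "NB F (x#xs) = (\<lambda>c. c#xs) ` (F - {x}) \<union> (\<lambda>zs. x#zs) ` NB F xs"
  using assms by (auto simp: NB_def length_Suc_conv)

lemma finite_NB: "finite F \<Longrightarrow> finite (NB F xs)"
  by (rule finite_subset[of _ "{zs. set zs \<subseteq> F \<and> length zs = length xs}"])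
     (auto simp: NB_def intro: finite_lists_length_eq)

lemma a_factor_True:
  assumes "q > 1"
  shows "a_factor q True j = ((real q - 1) ^ j + (real q - 1) * (-1) ^ j) / real q"
proof (cases j)
  case 0
  have "real q - 1 \<noteq> 0" using assms by simp
  then show ?thesis using 0 assms by (simp add: a_factor_def field_simps)
next
  case (Suc i)
  have "int j - 1 = int i" using Suc by simp
  then show ?thesis using Suc by (simp add: a_factor_def field_simps power_int_of_nat)
qed

lemma a_factor_False:
  "a_factor q False j = ((real q - 1) ^ j - (-1) ^ j) / real q"
  by (simp add: a_factor_def)

lemma a_factor_rec:
  assumes fin: "finite F" and cq: "card F = q" and q: "q > 1" and x: "x \<in> F" and y: "y \<in> F"
  shows "a_factor q (x = y) (Suc j) = (\<Sum>c\<in>F-{x}. a_factor q (c = y) j)"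
proof (cases "x = y")
  case True
  have "(\<Sum>c\<in>F-{x}. a_factor q (c = y) j) = (\<Sum>c\<in>F-{x}. a_factor q False j)"
    using True by (intro sum.cong) auto
  also have "\<dots> = (real q - 1) * a_factor q False j"
    using fin cq x q by (simp add: of_nat_diff)
  finally show ?thesis using True q
    by (simp add: a_factor_True a_factor_False field_simps)
next
  case False
  have "(\<Sum>c\<in>F-{x}. a_factor q (c = y) j) = a_factor q True j + (\<Sum>c\<in>F-{x}-{y}. a_factor q (c = y) j)"
    using False y fin by (subst sum.remove[of _ y]) auto
  also have "(\<Sum>c\<in>F-{x}-{y}. a_factor q (c = y) j) = (\<Sum>c\<in>F-{x}-{y}. a_factor q False j)"
    by (intro sum.cong) auto
  also have "\<dots> = (real q - 2) * a_factor q False j"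
  proof -
    have "card (F - {x} - {y}) = q - 2" using fin cq x y False by (simp add: card_Diff_subset)
    moreover have "q \<ge> 2" using False x y fin cq
      by (metis One_nat_def Suc_1 card_le_Suc0_iff_eq not_less_eq_eq)
    ultimately show ?thesis by (simp add: of_nat_diff)
  qed
  finally have S: "(\<Sum>c\<in>F-{x}. a_factor q (c = y) j) = a_factor q True j + (real q - 2) * a_factor q False j" .
  show ?thesis unfolding S using False q
    by (simp add: a_factor_True a_factor_False field_simps)
qed

fun HT :: "nat \<Rightarrow> nat \<Rightarrow> bool list \<Rightarrow> real" where
  "HT q r [] = (if r = 0 then 1 else 0)"
| "HT q r (e#es) = (\<Sum>j\<le>r. real (r choose j) * a_factor q e j * HT q (r - j) es)"

lemma pascal_sum:
  fixes A B :: "nat \<Rightarrow> real"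
  shows "(\<Sum>j\<le>Suc r. real (Suc r choose j) * A j * B (Suc r - j))
       = (\<Sum>j\<le>r. real (r choose j) * A (Suc j) * B (r - j))
       + (\<Sum>j\<le>r. real (r choose j) * A j * B (Suc (r - j)))"
proof -
  have e1: "(\<Sum>j\<le>Suc r. real (Suc r choose j) * A j * B (Suc r - j))
      = A 0 * B (Suc r) + (\<Sum>i\<le>r. real (Suc r choose Suc i) * A (Suc i) * B (r - i))"
    by (subst sum.atMost_Suc_shift) simp
  have e2: "(\<Sum>i\<le>r. real (Suc r choose Suc i) * A (Suc i) * B (r - i))
      = (\<Sum>i\<le>r. real (r choose i) * A (Suc i) * B (r - i))
      + (\<Sum>i\<le>r. real (r choose Suc i) * A (Suc i) * B (r - i))"
    by (simp add: sum.distrib[symmetric] algebra_simps)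
  have e3: "(\<Sum>j\<le>Suc r. real (r choose j) * A j * B (Suc r - j))
      = A 0 * B (Suc r) + (\<Sum>i\<le>r. real (r choose Suc i) * A (Suc i) * B (r - i))"
    by (subst sum.atMost_Suc_shift) simp
  have e4: "(\<Sum>j\<le>Suc r. real (r choose j) * A j * B (Suc r - j))
      = (\<Sum>j\<le>r. real (r choose j) * A j * B (Suc (r - j)))"
    by (simp add: Suc_diff_le)
  show ?thesis using e1 e2 e3 e4 by linarith
qed

lemma HT_neighbors:
  assumes fin: "finite F" and cq: "card F = q" and q: "q > 1"
  shows "length ys = length xs \<Longrightarrow> set xs \<subseteq> F \<Longrightarrow> set ys \<subseteq> F \<Longrightarrow>
    HT q (Suc r) (map2 (=) xs ys) = (\<Sum>zs\<in>NB F xs. HT q r (map2 (=) zs ys))"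
proof (induction xs arbitrary: ys r)
  case Nil then show ?case by (simp add: NB_Nil)
next
  case (Cons x xs)
  then obtain y ys' where ys: "ys = y # ys'" and l: "length ys' = length xs"
    by (cases ys) auto
  have x: "x \<in> F" and xs: "set xs \<subseteq> F" and y: "y \<in> F" and ys': "set ys' \<subseteq> F"
    using Cons.prems ys by auto
  define A where "A j = a_factor q (x = y) j" for j
  define B where "B n = HT q n (map2 (=) xs ys')" for n
  have "HT q (Suc r) (map2 (=) (x#xs) ys) = (\<Sum>j\<le>Suc r. real (Suc r choose j) * A j * B (Suc r - j))"
    by (simp add: ys A_def B_def)
  also have "\<dots> = (\<Sum>j\<le>r. real (r choose j) * A (Suc j) * B (r - j))
       + (\<Sum>j\<le>r. real (r choose j) * A j * B (Suc (r - j)))"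
    by (rule pascal_sum)
  also have "(\<Sum>j\<le>r. real (r choose j) * A (Suc j) * B (r - j))
      = (\<Sum>c\<in>F-{x}. HT q r (map2 (=) (c#xs) ys))"
  proof -
    have "(\<Sum>j\<le>r. real (r choose j) * A (Suc j) * B (r - j))
        = (\<Sum>j\<le>r. \<Sum>c\<in>F-{x}. real (r choose j) * a_factor q (c = y) j * B (r - j))"
      unfolding A_def a_factor_rec[OF fin cq q x y]
      by (simp add: sum_distrib_left sum_distrib_right mult.assoc)
    also have "\<dots> = (\<Sum>c\<in>F-{x}. \<Sum>j\<le>r. real (r choose j) * a_factor q (c = y) j * B (r - j))"
      by (rule sum.swap)
    finally show ?thesis by (simp add: ys B_def)
  qed
  also have "(\<Sum>j\<le>r. real (r choose j) * A j * B (Suc (r - j)))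
      = (\<Sum>zs\<in>NB F xs. HT q r (map2 (=) (x#zs) ys))"
  proof -
    have "(\<Sum>j\<le>r. real (r choose j) * A j * B (Suc (r - j)))
        = (\<Sum>j\<le>r. \<Sum>zs\<in>NB F xs. real (r choose j) * A j * HT q (r - j) (map2 (=) zs ys'))"
      unfolding B_def using Cons.IH[OF l xs ys'] by (simp add: sum_distrib_left)
    also have "\<dots> = (\<Sum>zs\<in>NB F xs. \<Sum>j\<le>r. real (r choose j) * A j * HT q (r - j) (map2 (=) zs ys'))"
      by (rule sum.swap)
    finally show ?thesis by (simp add: ys A_def)
  qed
  also have "(\<Sum>c\<in>F-{x}. HT q r (map2 (=) (c#xs) ys)) + (\<Sum>zs\<in>NB F xs. HT q r (map2 (=) (x#zs) ys))
      = (\<Sum>zs\<in>NB F (x#xs). HT q r (map2 (=) zs ys))"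
  proof -
    have "(\<Sum>zs\<in>NB F (x#xs). HT q r (map2 (=) zs ys))
        = (\<Sum>zs\<in>(\<lambda>c. c#xs) ` (F - {x}). HT q r (map2 (=) zs ys))
        + (\<Sum>zs\<in>(\<lambda>zs. x#zs) ` NB F xs. HT q r (map2 (=) zs ys))"
      unfolding NB_Cons[OF x xs]
      by (rule sum.union_disjoint) (auto simp: fin finite_NB)
    also have "\<dots> = (\<Sum>c\<in>F-{x}. HT q r (map2 (=) (c#xs) ys)) + (\<Sum>zs\<in>NB F xs. HT q r (map2 (=) (x#zs) ys))"
      by (simp add: sum.reindex inj_on_def)
    finally show ?thesis by simp
  qed
  finally show ?case .
qed

lemma HT_0: "a_factor q True 0 = 1 \<Longrightarrow> HT q 0 es = (if \<forall>e\<in>set es. e then 1 else 0)"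
  by (induction es) (auto simp: a_factor_def)

lemma all_map2_eq: "length xs = length ys \<Longrightarrow> (\<forall>e\<in>set (map2 (=) xs ys). e) \<longleftrightarrow> xs = ys"
  by (induction xs ys rule: list_induct2) auto

lemma hamming_walks_HT:
  assumes fin: "finite F" and cq: "card F = q" and q: "q > 1"
    and xs: "length xs = n" "set xs \<subseteq> F" and ys: "length ys = n" "set ys \<subseteq> F"
  shows "real (walk_count (hamming_vertices n F) (hamming_adj n) r xs ys) = HT q r (map2 (=) xs ys)"
  using xs
proof (induction r arbitrary: xs)
  case 0
  have "a_factor q True 0 = 1" using q by (simp add: a_factor_True)
  then show ?case using 0 ys all_map2_eq[of xs ys]
    by (simp add: walk_count_0 HT_0 hamming_vertices_def)
next
  case (Suc r)
  have finV: "finite (hamming_vertices n F)"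
    unfolding hamming_vertices_def using finite_lists_length_eq[OF fin, of n]
    by (simp add: conj_commute)
  have xV: "xs \<in> hamming_vertices n F" using Suc.prems by (simp add: hamming_vertices_def)
  have nb: "{z \<in> hamming_vertices n F. hamming_adj n xs z} = NB F xs"
    using Suc.prems by (auto simp: hamming_vertices_def NB_def hamming_adj_ad1)
  have "real (walk_count (hamming_vertices n F) (hamming_adj n) (Suc r) xs ys)
      = (\<Sum>zs\<in>NB F xs. real (walk_count (hamming_vertices n F) (hamming_adj n) r zs ys))"
    unfolding walk_count_Suc[OF finV xV] nb by simp
  also have "\<dots> = (\<Sum>zs\<in>NB F xs. HT q r (map2 (=) zs ys))"
    by (intro sum.cong refl Suc.IH) (auto simp: NB_def Suc.prems)
  also have "\<dots> = HT q (Suc r) (map2 (=) xs ys)"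
    using HT_neighbors[OF fin cq q, of ys xs r] Suc.prems ys by simp
  finally show ?case .
qed



lemma finite_sumlists: "finite {rs :: nat list. length rs = n \<and> sum_list rs = r}"
proof (rule finite_subset[of _ "{rs. set rs \<subseteq> {..r} \<and> length rs = n}"])
  show "{rs :: nat list. length rs = n \<and> sum_list rs = r} \<subseteq> {rs. set rs \<subseteq> {..r} \<and> length rs = n}"
    using member_le_sum_list by fastforce
qed (rule finite_lists_length_eq, simp)

lemma sum_sumlists_Cons:
  fixes g :: "nat list \<Rightarrow> real"
  shows "(\<Sum>rs\<in>{rs. length rs = Suc n \<and> sum_list rs = r}. g rs)
       = (\<Sum>j\<le>r. \<Sum>t\<in>{t. length t = n \<and> sum_list t = r - j}. g (j # t))"
proof -
  have "(\<Sum>rs\<in>{rs. length rs = Suc n \<and> sum_list rs = r}. g rs)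
      = (\<Sum>jt\<in>Sigma {..r} (\<lambda>j. {t. length t = n \<and> sum_list t = r - j}). g (fst jt # snd jt))"
    by (rule sum.reindex_bij_witness[of _ "\<lambda>jt. fst jt # snd jt" "\<lambda>rs. (hd rs, tl rs)"])
       (auto simp: length_Suc_conv)
  also have "\<dots> = (\<Sum>j\<le>r. \<Sum>t\<in>{t. length t = n \<and> sum_list t = r - j}. g (j # t))"
    by (subst sum.Sigma) (auto simp: finite_sumlists split_def)
  finally show ?thesis .
qed

lemma HT_formula:
  "HT q r es = (\<Sum>rs \<in> {rs :: nat list. length rs = length es \<and> sum_list rs = r}.
      real (fact r) / (\<Prod>i<length es. real (fact (rs ! i))) * (\<Prod>i<length es. a_factor q (es ! i) (rs ! i)))"
proof (induction es arbitrary: r)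
  case Nil
  have "{rs :: nat list. length rs = 0 \<and> sum_list rs = r} = (if r = 0 then {[]} else {})" by auto
  then show ?case by simp
next
  case (Cons e es)
  let ?n = "length es"
  have "(\<Sum>rs \<in> {rs :: nat list. length rs = length (e#es) \<and> sum_list rs = r}.
      real (fact r) / (\<Prod>i<length (e#es). real (fact (rs ! i))) * (\<Prod>i<length (e#es). a_factor q ((e#es) ! i) (rs ! i)))
     = (\<Sum>j\<le>r. \<Sum>t\<in>{t. length t = ?n \<and> sum_list t = r - j}.
      real (fact r) / (real (fact j) * (\<Prod>i<?n. real (fact (t ! i)))) * (a_factor q e j * (\<Prod>i<?n. a_factor q (es ! i) (t ! i))))"
    apply (simp only: length_Cons sum_sumlists_Cons prod.lessThan_Suc_shift)
    apply (simp del: of_nat_fact)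
    done
  also have "\<dots> = (\<Sum>j\<le>r. real (r choose j) * a_factor q e j * HT q (r - j) es)"
  proof (intro sum.cong refl)
    fix j assume j: "j \<in> {..r}"
    have H: "real (fact r) = real (fact j) * real (r choose j) * real (fact (r - j))"
    proof -
      have N: "(fact j * fact (r - j) * (r choose j) :: nat) = fact r"
        using j by (simp add: binomial_fact_lemma)
      show ?thesis unfolding N[symmetric] of_nat_mult by (simp only: ac_simps)
    qed
    then show "(\<Sum>t\<in>{t. length t = ?n \<and> sum_list t = r - j}.
      real (fact r) / (real (fact j) * (\<Prod>i<?n. real (fact (t ! i)))) * (a_factor q e j * (\<Prod>i<?n. a_factor q (es ! i) (t ! i))))
      = real (r choose j) * a_factor q e j * HT q (r - j) es"
      unfolding Cons.IH[of "r - j"] sum_distrib_left H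
      by (intro sum.cong refl) (simp del: of_nat_fact)
  qed
  finally show ?case by simp
qed



locale PS =
  fixes p m k a b u :: nat and \<omega> :: "'a::{field,finite}"
  assumes prime: "prime p" and m0: "m > 0" and k0: "k > 0" and kdvd: "k dvd p ^ m - 1"
    and card: "card (UNIV :: 'a set) = p ^ m"
    and u: "u = (p ^ m - 1) div k"
    and prim: "primitive_divisor p m u"
    and a1: "a \<ge> 1" and b1: "b > 1" and ub: "u = b * (p ^ a - 1)" and mab: "m = a * b"
    and pe: "primitive_element \<omega>"
begin

abbreviation "N \<equiv> p ^ m - 1"
abbreviation "q \<equiv> p ^ a"
abbreviation "F \<equiv> (subfield_q q :: 'a set)"
abbreviation "\<beta> \<equiv> \<omega> ^ k"

lemma p2: "p \<ge> 2" using prime prime_ge_2_nat by blast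
lemma q2: "q \<ge> 2"
proof -
  have "p ^ 1 \<le> p ^ a" using a1 p2 by (intro power_increasing) auto
  then show ?thesis using p2 by simp
qed
lemma q1: "q > 1" using q2 by simp
lemma N_eq: "N = u * k" using kdvd u by simp
lemma N_eq2: "N = k * b * (q - 1)" using N_eq ub by simp
lemma Npos: "N > 0"
proof -
  have "1 < p ^ m" using p2 m0 by (intro one_less_power) auto
  then show ?thesis by simp
qed

lemma CHAR_p: "CHAR('a) = p"
proof -
  have pos: "CHAR('a) > 0" by (rule finite_imp_CHAR_pos) simp
  have pr: "prime CHAR('a)" by (rule prime_CHAR_semidom[OF pos])
  have "CHAR('a) dvd p ^ m" using CHAR_dvd_CARD[where 'a='a] card by simp
  then have "CHAR('a) dvd p" using pr prime_dvd_power by blast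
  then have "CHAR('a) = 1 \<or> CHAR('a) = p" using prime unfolding prime_nat_iff by blast
  then show ?thesis using pr by auto
qed

lemma card_UNIV_N: "card (UNIV - {0::'a}) = N"
  using card by (simp add: card_Diff_singleton)

lemma pow_N: assumes "x \<noteq> (0::'a)" shows "x ^ N = 1"
proof -
  have "x * (\<Prod>y\<in>UNIV-{0}. x * y) = x * x ^ (card (UNIV :: 'a set) - 1) * \<Prod>(UNIV-{0})"
    by (simp add: prod.distrib mult_ac)
  also have "(\<Prod>y\<in>UNIV-{0}. x * y) = (\<Prod>y\<in>UNIV-{0}. y)"
    by (rule prod.reindex_bij_witness[of _ "\<lambda>y. y / x" "\<lambda>y. x * y"]) (use assms in auto)
  finally have "x * \<Prod>(UNIV-{0::'a}) = x * x ^ N * \<Prod>(UNIV-{0})" using card by simp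
  moreover have "\<Prod>(UNIV-{0::'a}) \<noteq> 0" by simp
  ultimately show ?thesis using assms by simp
qed

lemma omega_nz: "\<omega> \<noteq> 0" using pe by (simp add: primitive_element_def)

lemma pow_mod_gen: assumes "\<omega> ^ d = 1" shows "\<omega> ^ n = \<omega> ^ (n mod d)"
proof -
  have "\<omega> ^ (d * (n div d) + n mod d) = (\<omega> ^ d) ^ (n div d) * \<omega> ^ (n mod d)"
    by (simp only: power_add power_mult)
  also have "\<dots> = \<omega> ^ (n mod d)" using assms by simp
  finally show ?thesis by (simp only: mult_div_mod_eq)
qed

lemma pow_inj_lt: assumes "i < j" "j < N" "\<omega> ^ i = \<omega> ^ j" shows False
proof -
  define d where "d = j - i"
  have d: "d > 0" "d < N" using assms by (auto simp: d_def)
  have ij: "i + d = j" using assms by (simp add: d_def)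
  have "\<omega> ^ i * \<omega> ^ d = \<omega> ^ j" by (simp only: ij flip: power_add)
  then have "\<omega> ^ i * \<omega> ^ d = \<omega> ^ i * 1" using assms(3) by simp
  then have od: "\<omega> ^ d = 1" using omega_nz by simp
  have "UNIV - {0} \<subseteq> (\<lambda>n. \<omega> ^ n) ` {..<d}"
  proof
    fix x :: 'a assume "x \<in> UNIV - {0}"
    then obtain n where "x = \<omega> ^ n" using pe by (auto simp: primitive_element_def)
    then have "x = \<omega> ^ (n mod d)" using pow_mod_gen[OF od] by simp
    then show "x \<in> (\<lambda>n. \<omega> ^ n) ` {..<d}" using d by auto
  qed
  then have "card (UNIV - {0::'a}) \<le> card ((\<lambda>n. \<omega> ^ n) ` {..<d})" by (intro card_mono) auto
  also have "\<dots> \<le> d" using card_image_le[of "{..<d}" "\<lambda>n. \<omega> ^ n"] by simp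
  finally show False using card_UNIV_N d by simp
qed

lemma pow_inj: "i < N \<Longrightarrow> j < N \<Longrightarrow> \<omega> ^ i = \<omega> ^ j \<Longrightarrow> i = j"
  using pow_inj_lt by (metis linorder_neqE_nat)

lemma omega_N: "\<omega> ^ N = 1" using pow_N omega_nz by blast

lemma pow_eq_iff: "\<omega> ^ i = \<omega> ^ j \<longleftrightarrow> i mod N = j mod N"
proof
  assume "\<omega> ^ i = \<omega> ^ j"
  then have "\<omega> ^ (i mod N) = \<omega> ^ (j mod N)" using pow_mod_gen[OF omega_N] by metis
  then show "i mod N = j mod N" using pow_inj Npos by simp
next
  assume "i mod N = j mod N"
  then show "\<omega> ^ i = \<omega> ^ j" using pow_mod_gen[OF omega_N] by metis
qed

lemma pow_one_iff: "\<omega> ^ n = 1 \<longleftrightarrow> N dvd n"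
  using pow_eq_iff[of n 0] by (simp add: mod_eq_0_iff_dvd)

lemma F_iff: "c \<in> F \<longleftrightarrow> c ^ q = c" by (simp add: subfield_q_def)

lemma frob_add: "(x + y :: 'a) ^ q = x ^ q + y ^ q"
  by (rule freshmans_dream') (simp_all add: CHAR_p prime)

lemma F_diff: assumes "c \<in> F" "d \<in> F" shows "c - d \<in> F"
proof -
  have "c ^ q = (c - d) ^ q + d ^ q" using frob_add[of "c - d" d] by simp
  then have "(c - d) ^ q = c - d" using assms by (simp add: F_iff eq_diff_eq)
  then show ?thesis by (simp add: F_iff)
qed

lemma F_0: "0 \<in> F" using p2 by (simp add: F_iff)

lemma q_Suc: "q = Suc (q - 1)" using q2 by simp

lemma F_nonzero_pow: assumes "c \<in> F" "c \<noteq> 0" shows "\<exists>s. c = \<beta> ^ (b * s)"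
proof -
  obtain n where n: "c = \<omega> ^ n" using assms pe by (auto simp: primitive_element_def)
  have "c * c ^ (q - 1) = c * 1" using assms by (metis F_iff mult_1_right power_Suc q_Suc)
  then have "c ^ (q - 1) = 1" using assms by simp
  then have "\<omega> ^ (n * (q - 1)) = 1" using n by (simp add: power_mult)
  then have "k * b * (q - 1) dvd n * (q - 1)" using pow_one_iff N_eq2 by simp
  then have "k * b dvd n" using q2 by simp
  then obtain s where "n = k * b * s" by (rule dvdE)
  then show ?thesis using n by (auto simp: power_mult mult.assoc)
qed

lemma beta_pow_F: "\<beta> ^ (b * s) \<in> F"
proof -
  have e: "k * (b * s) * (q - 1) = N * s" using N_eq2 by (simp add: ac_simps)
  have "(\<beta> ^ (b * s)) ^ (q - 1) = \<omega> ^ (k * (b * s) * (q - 1))" by (simp only: power_mult)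
  also have "\<dots> = \<omega> ^ (N * s)" by (simp only: e)
  also have "\<dots> = 1" by (simp add: pow_one_iff)
  finally have "(\<beta> ^ (b * s)) ^ q = \<beta> ^ (b * s)"
    by (subst q_Suc) (simp only: power_Suc, simp)
  then show ?thesis by (simp add: F_iff)
qed

lemma kth_iff: "y \<in> kth_powers k \<longleftrightarrow> (\<exists>j. y = \<beta> ^ j)"
proof
  assume "y \<in> kth_powers k"
  then obtain z where z: "y = z ^ k" "z \<noteq> 0" by (auto simp: kth_powers_def)
  then obtain n where "z = \<omega> ^ n" using pe by (auto simp: primitive_element_def)
  then have "y = \<beta> ^ n" using z by (simp add: mult.commute flip: power_mult)
  then show "\<exists>j. y = \<beta> ^ j" ..
next
  assume "\<exists>j. y = \<beta> ^ j"
  then obtain j where "y = \<beta> ^ j" ..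
  then have "y = (\<omega> ^ j) ^ k" by (simp add: mult.commute flip: power_mult)
  then show "y \<in> kth_powers k" using omega_nz by (auto simp: kth_powers_def)
qed

lemma kth_iff2: "y \<in> kth_powers k \<longleftrightarrow> (\<exists>c i. c \<in> F \<and> c \<noteq> 0 \<and> i < b \<and> y = c * \<beta> ^ i)"
proof
  assume "y \<in> kth_powers k"
  then obtain j where j: "y = \<beta> ^ j" using kth_iff by blast
  have "y = \<beta> ^ (b * (j div b)) * \<beta> ^ (j mod b)" unfolding j
    by (simp flip: power_add)
  moreover have "\<beta> ^ (b * (j div b)) \<in> F" by (rule beta_pow_F)
  moreover have "\<beta> ^ (b * (j div b)) \<noteq> 0" using omega_nz by simp
  moreover have "j mod b < b" using b1 by simp
  ultimately show "\<exists>c i. c \<in> F \<and> c \<noteq> 0 \<and> i < b \<and> y = c * \<beta> ^ i" by blast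
next
  assume "\<exists>c i. c \<in> F \<and> c \<noteq> 0 \<and> i < b \<and> y = c * \<beta> ^ i"
  then obtain c i where c: "c \<in> F" "c \<noteq> 0" "y = c * \<beta> ^ i" by blast
  then obtain s where "c = \<beta> ^ (b * s)" using F_nonzero_pow by blast
  then have "y = \<beta> ^ (b * s + i)" using c by (simp add: power_add)
  then show "y \<in> kth_powers k" using kth_iff by blast
qed

end


context PS begin

lemma frob_pow_F: "c \<in> F \<Longrightarrow> c ^ (q ^ t) = c"
proof (induction t)
  case (Suc t)
  have "c ^ (q ^ Suc t) = (c ^ q) ^ (q ^ t)" by (simp add: power_mult)
  then show ?case using Suc by (simp add: F_iff)
qed simp

lemma frob_sum: "(\<Sum>j\<in>A. f j :: 'a) ^ (q ^ t) = (\<Sum>j\<in>A. f j ^ (q ^ t))"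
  by (rule freshmans_dream_sum'[where n="a * t"]) (simp_all add: CHAR_p prime power_mult)

lemma coprime_u_p: "coprime u p"
proof (rule ccontr)
  assume "\<not> coprime u p"
  then have "p dvd u" using prime by (metis coprime_commute prime_imp_coprime)
  then have "p dvd u * k" by (rule dvd_mult2)
  then have pN: "p dvd N" by (simp only: N_eq)
  have "p dvd p ^ m" using m0 by (simp add: dvd_power)
  then have "p dvd p ^ m - N" using pN by (rule dvd_diff_nat)
  moreover have "p ^ m - N = 1" using Npos by simp
  ultimately have "p dvd 1" by simp
  then show False using prime by simp
qed

lemma beta_frob_inj: "inj_on (\<lambda>t. \<beta> ^ (q ^ t)) {..<b}"
proof -
  have False if st: "s < t" "t < b" "\<beta> ^ (q ^ s) = \<beta> ^ (q ^ t)" for s t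
  proof -
    have "\<omega> ^ (k * q ^ t) = \<omega> ^ (k * q ^ s)" using st by (simp add: power_mult)
    then have "(k * q ^ t) mod N = (k * q ^ s) mod N" using pow_eq_iff by blast
    moreover have "k * q ^ s \<le> k * q ^ t" using st q2 by (intro mult_le_mono2 power_increasing) auto
    ultimately have "N dvd k * q ^ t - k * q ^ s" using mod_eq_dvd_iff_nat by blast
    moreover have "k * q ^ t - k * q ^ s = k * (q ^ s * (q ^ (t - s) - 1))"
    proof -
      have e: "q ^ s * q ^ (t - s) = q ^ t" using st by (simp flip: power_add)
      have "q ^ s * (q ^ (t - s) - 1) = q ^ s * q ^ (t - s) - q ^ s"
        by (simp only: diff_mult_distrib2 mult_1_right)
      then have "q ^ s * (q ^ (t - s) - 1) = q ^ t - q ^ s" by (simp only: e)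
      then show ?thesis by (simp only: diff_mult_distrib2)
    qed
    ultimately have "u * k dvd k * (q ^ s * (q ^ (t - s) - 1))" using N_eq by simp
    then have "u dvd q ^ s * (q ^ (t - s) - 1)" using k0 by (simp add: mult.commute)
    moreover have "coprime u (q ^ s)" using coprime_u_p by (simp add: coprime_power_right_iff power_mult)
    ultimately have "u dvd q ^ (t - s) - 1" using coprime_dvd_mult_right_iff by blast
    then have "u dvd p ^ (a * (t - s)) - 1" by (simp add: power_mult)
    moreover have "1 \<le> a * (t - s)" using a1 st by simp
    moreover have "a * (t - s) < m" using a1 st mab by simp
    ultimately show False using prim by (auto simp: primitive_divisor_def)
  qed
  note H = this
  show ?thesis
  proof (rule inj_onI)
    fix s t assume s: "s \<in> {..<b}" and t: "t \<in> {..<b}" and e: "\<beta> ^ (q ^ s) = \<beta> ^ (q ^ t)"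
    show "s = t"
    proof (rule ccontr)
      assume "s \<noteq> t"
      then consider "s < t" | "t < s" by linarith
      then show False
      proof cases
        case 1 then show False using H[of s t] t e by simp
      next
        case 2 then show False using H[of t s] s e by simp
      qed
    qed
  qed
qed

lemma lin_indep:
  assumes dF: "\<forall>j<b. d j \<in> F" and s0: "(\<Sum>j<b. d j * \<beta> ^ j) = 0" and j0: "j0 < b"
  shows "d j0 = 0"
proof (rule ccontr)
  assume nz: "d j0 \<noteq> 0"
  define P where "P = (\<Sum>j<b. monom (d j) j)"
  have coeffP: "coeff P i = (if i < b then d i else 0)" for i
    unfolding P_def coeff_sum by (simp add: coeff_monom)
  have P0: "P \<noteq> 0" using coeffP[of j0] j0 nz by auto
  have degP: "degree P \<le> b - 1" by (rule degree_le) (auto simp: coeffP)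
  have polyP: "poly P x = (\<Sum>j<b. d j * x ^ j)" for x
    unfolding P_def poly_sum by (simp add: poly_monom)
  have roots: "(\<lambda>t. \<beta> ^ (q ^ t)) ` {..<b} \<subseteq> {x. poly P x = 0}"
  proof clarify
    fix t assume "t < b"
    have "poly P (\<beta> ^ (q ^ t)) = (\<Sum>j<b. (d j * \<beta> ^ j) ^ (q ^ t))"
      unfolding polyP
    proof (intro sum.cong refl)
      fix j assume "j \<in> {..<b}"
      then have "d j ^ (q ^ t) = d j" using dF frob_pow_F by auto
      then show "d j * (\<beta> ^ q ^ t) ^ j = (d j * \<beta> ^ j) ^ q ^ t"
        by (simp add: power_mult_distrib mult.commute flip: power_mult) (simp add: mult.assoc)
    qed
    also have "\<dots> = (\<Sum>j<b. d j * \<beta> ^ j) ^ (q ^ t)" by (rule frob_sum[symmetric])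
    also have "\<dots> = 0" using s0 p2 by simp
    finally show "poly P (\<beta> ^ (q ^ t)) = 0" .
  qed
  have "b = card ((\<lambda>t. \<beta> ^ (q ^ t)) ` {..<b})" using beta_frob_inj by (simp add: card_image)
  also have "\<dots> \<le> card {x. poly P x = 0}" by (rule card_mono[OF poly_roots_finite[OF P0] roots])
  also have "\<dots> \<le> degree P" by (rule card_poly_roots_bound[OF P0])
  finally show False using degP b1 by simp
qed

definition phi :: "'a list \<Rightarrow> 'a" where
  "phi cs = (\<Sum>i<b. cs ! i * \<omega> ^ (i * k))"

lemma phi_beta: "phi cs = (\<Sum>i<b. cs ! i * \<beta> ^ i)"
  unfolding phi_def by (simp add: mult.commute flip: power_mult)

abbreviation "HV \<equiv> hamming_vertices b F"

lemma phi_diff: "phi cs - phi ds = (\<Sum>i<b. (cs ! i - ds ! i) * \<beta> ^ i)"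
  unfolding phi_beta by (simp add: sum_subtractf left_diff_distrib)

lemma phi_inj: "inj_on phi HV"
proof (rule inj_onI)
  fix cs ds assume cs: "cs \<in> HV" and ds: "ds \<in> HV" and e: "phi cs = phi ds"
  have "(\<Sum>i<b. (cs ! i - ds ! i) * \<beta> ^ i) = 0" using e phi_diff[of cs ds] by simp
  moreover have "\<forall>j<b. cs ! j - ds ! j \<in> F"
    using cs ds by (auto simp: hamming_vertices_def intro!: F_diff nth_mem)
  ultimately have "\<forall>j<b. cs ! j - ds ! j = 0" using lin_indep[of "\<lambda>j. cs ! j - ds ! j"] by blast
  then show "cs = ds" using cs ds by (auto simp: hamming_vertices_def intro: nth_equalityI)
qed

lemma finite_F: "finite F" by simp

lemma card_F_ge: "card F \<ge> q"
proof -
  have sub: "insert 0 ((\<lambda>j. \<beta> ^ (b * j)) ` {..<q - 1}) \<subseteq> F" using F_0 beta_pow_F by auto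
  have inj: "inj_on (\<lambda>j. \<beta> ^ (b * j)) {..<q - 1}"
  proof (rule inj_onI)
    fix i j assume i: "i \<in> {..<q - 1}" and j: "j \<in> {..<q - 1}" and e: "\<beta> ^ (b * i) = \<beta> ^ (b * j)"
    have "\<omega> ^ (k * b * i) = \<omega> ^ (k * b * j)" using e by (simp add: power_mult mult.assoc)
    moreover have "k * b * i < N" "k * b * j < N" using i j N_eq2 k0 b1 by auto
    ultimately have "k * b * i = k * b * j" using pow_inj by blast
    then show "i = j" using k0 b1 by simp
  qed
  have "card (insert 0 ((\<lambda>j. \<beta> ^ (b * j)) ` {..<q - 1})) = q"
    using inj omega_nz q2 by (subst card_insert_disjoint) (auto simp: card_image)
  then show ?thesis using card_mono[OF finite_F sub] by simp
qed

lemma card_HV: "card HV = card F ^ b"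
  unfolding hamming_vertices_def using card_lists_length_eq[OF finite_F, of b]
  by (simp add: conj_commute)

lemma card_F: "card F = q" and phi_bij: "bij_betw phi HV UNIV"
proof -
  have "card (phi ` HV) \<le> card (UNIV :: 'a set)" by (rule card_mono) auto
  then have le: "card F ^ b \<le> q ^ b" using card_image[OF phi_inj] card_HV card mab
    by (simp add: power_mult)
  have bS: "Suc (b - 1) = b" using b1 by simp
  have "card F \<le> q"
  proof (rule power_le_imp_le_base[where n="b - 1"])
    show "card F ^ Suc (b - 1) \<le> q ^ Suc (b - 1)" unfolding bS by (rule le)
  qed simp
  then show cF: "card F = q" using card_F_ge by simp
  have "phi ` HV = UNIV"
  proof (rule card_seteq)
    show "card (UNIV :: 'a set) \<le> card (phi ` HV)"
      using card_image[OF phi_inj] card_HV cF card mab by (simp add: power_mult)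
  qed auto
  then show "bij_betw phi HV UNIV" using phi_inj by (simp add: bij_betw_def)
qed

lemma coords_eq: assumes "cs \<in> HV" "phi cs = x" shows "coords q b k \<omega> x = cs"
  unfolding coords_def
proof (rule the_equality)
  show "length cs = b \<and> set cs \<subseteq> F \<and> x = (\<Sum>i<b. cs ! i * \<omega> ^ (i * k))"
    using assms by (auto simp: hamming_vertices_def phi_def)
next
  fix ds assume "length ds = b \<and> set ds \<subseteq> F \<and> x = (\<Sum>i<b. ds ! i * \<omega> ^ (i * k))"
  then have "ds \<in> HV" "phi ds = x" by (auto simp: hamming_vertices_def phi_def)
  then show "ds = cs" using inj_onD[OF phi_inj, of ds cs] assms by simp
qed

lemma coords_spec: "coords q b k \<omega> x \<in> HV" "phi (coords q b k \<omega> x) = x"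
proof -
  have "x \<in> phi ` HV" using phi_bij by (simp add: bij_betw_def)
  then obtain cs where "cs \<in> HV" "phi cs = x" by blast
  then show "coords q b k \<omega> x \<in> HV" "phi (coords q b k \<omega> x) = x" using coords_eq by auto
qed

lemma coords_bij: "bij_betw (coords q b k \<omega>) UNIV HV"
proof (rule bij_betw_byWitness[where f'=phi])
  show "\<forall>a\<in>UNIV. phi (coords q b k \<omega> a) = a" using coords_spec(2) by blast
  show "\<forall>a'\<in>HV. coords q b k \<omega> (phi a') = a'" using coords_eq by blast
  show "coords q b k \<omega> ` UNIV \<subseteq> HV" using coords_spec(1) by blast
qed simp

end

context PS begin
lemma adj_iff: "hamming_adj b (coords q b k \<omega> x) (coords q b k \<omega> y) = paley_adj k x y"
proof -
  define cx where "cx = coords q b k \<omega> x"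
  define cy where "cy = coords q b k \<omega> y"
  have cxV: "cx \<in> HV" and cyV: "cy \<in> HV" unfolding cx_def cy_def by (rule coords_spec)+
  have dF: "cy ! j - cx ! j \<in> F" if "j < b" for j
    using cxV cyV that by (auto simp: hamming_vertices_def intro!: F_diff nth_mem)
  have yx: "y - x = (\<Sum>i<b. (cy ! i - cx ! i) * \<beta> ^ i)"
    using phi_diff[of cy cx] coords_spec unfolding cx_def cy_def by simp
  define D where "D = {i. i < b \<and> cx ! i \<noteq> cy ! i}"
  have "paley_adj k x y \<longleftrightarrow> (\<exists>c i. c \<in> F \<and> c \<noteq> 0 \<and> i < b \<and> y - x = c * \<beta> ^ i)"
    by (simp add: paley_adj_def kth_iff2)
  also have "\<dots> \<longleftrightarrow> (\<exists>i. D = {i})"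
  proof
    assume "\<exists>c i. c \<in> F \<and> c \<noteq> 0 \<and> i < b \<and> y - x = c * \<beta> ^ i"
    then obtain c i where c: "c \<in> F" "c \<noteq> 0" "i < b" "y - x = c * \<beta> ^ i" by blast
    define d where "d j = cy ! j - cx ! j - (if j = i then c else 0)" for j
    have "(\<Sum>j<b. (if j = i then c else 0) * \<beta> ^ j) = c * \<beta> ^ i"
    proof -
      have "(\<Sum>j<b. (if j = i then c else 0) * \<beta> ^ j) = (\<Sum>j<b. if j = i then c * \<beta> ^ j else 0)"
        by (intro sum.cong) auto
      also have "\<dots> = c * \<beta> ^ i" using c(3) by simp
      finally show ?thesis .
    qed
    then have "(\<Sum>j<b. d j * \<beta> ^ j) = 0"
      unfolding d_def using yx c(4) by (simp add: left_diff_distrib sum_subtractf)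
    moreover have "\<forall>j<b. d j \<in> F"
    proof (intro allI impI)
      fix j assume "j < b"
      have ite: "(if j = i then c else 0) \<in> F" using c(1) F_0 by simp
      show "d j \<in> F" unfolding d_def by (rule F_diff[OF dF[OF \<open>j < b\<close>] ite])
    qed
    ultimately have "\<forall>j<b. d j = 0" using lin_indep by blast
    then have dz: "cy ! j - cx ! j = (if j = i then c else 0)" if "j < b" for j
      using that by (simp add: d_def)
    have "D = {i}"
    proof (rule Set.set_eqI)
      fix j
      show "j \<in> D \<longleftrightarrow> j \<in> {i}"
      proof (cases "j < b")
        case True
        then show ?thesis using dz[OF True] c(2) c(3) unfolding D_def
          by (cases "j = i") (auto simp: right_minus_eq)
      next
        case False
        then show ?thesis using c(3) unfolding D_def by auto
      qed
    qed
    then show "\<exists>i. D = {i}" ..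
  next
    assume "\<exists>i. D = {i}"
    then obtain i where Di: "D = {i}" ..
    have "i \<in> D" using Di by simp
    then have i: "i < b" "cx ! i \<noteq> cy ! i" unfolding D_def by simp_all
    have eqj: "cy ! j = cx ! j" if "j < b" "j \<noteq> i" for j
    proof -
      have "j \<notin> D" using that Di by simp
      then show ?thesis using that unfolding D_def by simp
    qed
    have "y - x = (\<Sum>j<b. (if j = i then (cy ! i - cx ! i) * \<beta> ^ j else 0))"
      unfolding yx by (intro sum.cong refl) (auto simp: eqj)
    also have "\<dots> = (cy ! i - cx ! i) * \<beta> ^ i" using i by simp
    finally have "y - x = (cy ! i - cx ! i) * \<beta> ^ i" .
    moreover have "cy ! i - cx ! i \<in> F" "cy ! i - cx ! i \<noteq> 0" using dF i by auto
    ultimately show "\<exists>c i. c \<in> F \<and> c \<noteq> 0 \<and> i < b \<and> y - x = c * \<beta> ^ i" using i by blast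
  qed
  also have "\<dots> \<longleftrightarrow> card D = 1" by (simp add: card_1_singleton_iff)
  finally show ?thesis by (simp add: hamming_adj_def D_def cx_def cy_def)
qed

end


theorem proposition4p2:
  fixes p m k a b u :: nat and \<omega> x y :: "'a::{field,finite}" and r :: nat
  assumes "prime p" and "m > 0" and "k > 0" and "k dvd p ^ m - 1"
    and "card (UNIV :: 'a set) = p ^ m"
    and "u = (p ^ m - 1) div k"
    and "primitive_divisor p m u"
    and "a \<ge> 1" and "b > 1" and "u = b * (p ^ a - 1)" and "m = a * b"
    and "primitive_element \<omega>"
  shows "real (walk_count UNIV (paley_adj k) r x y)
           = real (walk_count (hamming_vertices b (subfield_q (p ^ a))) (hamming_adj b) r
                     (coords (p ^ a) b k \<omega> x) (coords (p ^ a) b k \<omega> y))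
       \<and> real (walk_count (hamming_vertices b (subfield_q (p ^ a))) (hamming_adj b) r
                     (coords (p ^ a) b k \<omega> x) (coords (p ^ a) b k \<omega> y))
           = (\<Sum>rs \<in> {rs :: nat list. length rs = b \<and> sum_list rs = r}.
                real (fact r) / (\<Prod>i<b. real (fact (rs ! i)))
                * (\<Prod>i<b. a_factor (p ^ a)
                      (coords (p ^ a) b k \<omega> x ! i = coords (p ^ a) b k \<omega> y ! i) (rs ! i)))"
proof -
  interpret PS p m k a b u \<omega>
    by (unfold_locales) (use assms in auto)
  define cx where "cx = coords (p ^ a) b k \<omega> x"
  define cy where "cy = coords (p ^ a) b k \<omega> y"
  have cxV: "cx \<in> HV" and cyV: "cy \<in> HV" unfolding cx_def cy_def by (rule coords_spec)+
  have part1: "walk_count HV (hamming_adj b) r cx cy = walk_count UNIV (paley_adj k) r x y"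
    unfolding cx_def cy_def
    by (rule walk_count_iso[OF _ coords_bij]) (simp_all add: adj_iff)
  have lx: "length cx = b" "set cx \<subseteq> F" and ly: "length cy = b" "set cy \<subseteq> F"
    using cxV cyV by (auto simp: hamming_vertices_def)
  have part2: "real (walk_count HV (hamming_adj b) r cx cy) = HT q r (map2 (=) cx cy)"
    by (rule hamming_walks_HT[OF finite_F card_F q1 lx ly])
  define es where "es = map2 (=) cx cy"
  have les: "length es = b" using lx ly by (simp add: es_def)
  have esi: "es ! i = (cx ! i = cy ! i)" if "i < b" for i
    using that lx ly by (simp add: es_def)
  have part3: "HT q r es = (\<Sum>rs \<in> {rs :: nat list. length rs = b \<and> sum_list rs = r}.
                real (fact r) / (\<Prod>i<b. real (fact (rs ! i)))
                * (\<Prod>i<b. a_factor q (cx ! i = cy ! i) (rs ! i)))"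
    unfolding HT_formula les
    by (intro sum.cong refl arg_cong2[where f="(*)"] prod.cong) (auto simp: esi)
  show ?thesis
    using part1 part2 part3 unfolding es_def cx_def cy_def by simp
qed


end
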